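(* Let $\mathcal B$ be a Bayesian network all of whose random variables are Boolean, and let $\Pi_{\mathcal B}$ be its $\mathrm{LP}^{\mathrm{MLN}}$ translation. Then for every truth assignment $I$ to the random variables of $\mathcal B$ (identified with the set of variables assigned true), the probability of $I$ under $\mathcal B$ equals $\sum_{J} P_{\Pi_{\mathcal B}}(J)$, where $J$ ranges over the interpretations of $\Pi_{\mathcal B}$ whose restriction to the variable atoms is $I$.
   Context: $\mathrm{LP}^{\mathrm{MLN}}$: a program is a finite set of weighted rules $w:R$ with $w$ real or the symbol $\alpha$ (infinite weight). For ground $\Pi$ and interpretation $I$: $\overline{\Pi}$ drops weights, $\Pi_I$ is the set of rules satisfied by $I$, $\mathrm{SM}[\Pi]=\{I: I\text{ stable model of }\overline{\Pi_I}\}$, $W_\Pi(I)=\exp(\sum_{w:R\in\Pi_I}w)$ if $I\in\mathrm{SM}[\Pi]$ and $0$ otherwise, and $P_\Pi(I)=\lim_{\alpha\to\infty}W_\Pi(I)/\sum_{J\in\mathrm{SM}[\Pi]}W_\Pi(J)$. Translation $\Pi_{\mathcal B}$: each random variable $V$ is an atom. For each node $V$ with parents $V_1,\dots,V_n$ ($n\ge0$) and each conditional probability table entry $P(V=\mathbf t\mid V_1=S_1,\dots,V_n=S_n)=p$, $S_j\in\{\mathbf t,\mathbf f\}$, introduce an atom $PF(V,S_1,\dots,S_n)$ and include: the weighted fact $\ln(p/(1-p)): PF(V,S_1,\dots,S_n)$ if $0<p<1$; the hard fact $\alpha: PF(V,S_1,\dots,S_n)$ if $p=1$; the hard constraint $\alpha:\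 \leftarrow \mathtt{not}\ PF(V,S_1,\dots,S_n)$ if $p=0$. Also include for each such entry the hard rule $\alpha: V\leftarrow V_1^{S_1},\dots,V_n^{S_n}, PF(V,S_1,\dots,S_n)$, where $V_j^{S_j}$ is $V_j$ if $S_j=\mathbf t$ and $\mathtt{not}\ V_j$ if $S_j=\mathbf f$. *)

theory Defs
  imports Complex_Main
begin

text \<open>A ground rule  H <- p1,...,pm, not n1,...,not nk ; head None = constraint.\<close>
datatype 'a rule = Rule (head: "'a option") (pos: "'a set") (neg: "'a set")

definition sat_body :: "'a set \<Rightarrow> 'a rule \<Rightarrow> bool" where
  "sat_body I r \<longleftrightarrow> pos r \<subseteq> I \<and> neg r \<inter> I = {}"

definition sat_rule :: "'a set \<Rightarrow> 'a rule \<Rightarrow> bool" where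
  "sat_rule I r \<longleftrightarrow> (sat_body I r \<longrightarrow> (case head r of None \<Rightarrow> False | Some h \<Rightarrow> h \<in> I))"

definition is_model :: "'a set \<Rightarrow> 'a rule set \<Rightarrow> bool" where
  "is_model I R \<longleftrightarrow> (\<forall>r\<in>R. sat_rule I r)"

definition reduct :: "'a rule set \<Rightarrow> 'a set \<Rightarrow> 'a rule set" where
  "reduct R I = {Rule (head r) (pos r) {} | r. r \<in> R \<and> neg r \<inter> I = {}}"

definition stable_model :: "'a rule set \<Rightarrow> 'a set \<Rightarrow> bool" where
  "stable_model R I \<longleftrightarrow> is_model I (reduct R I) \<and> (\<forall>J. J \<subset> I \<longrightarrow> \<not> is_model J (reduct R I))"

text \<open>Weights: a real number, or the symbol alpha (hard rule).\<close>
datatype weight = Soft real | Hard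

fun wval :: "real \<Rightarrow> weight \<Rightarrow> real" where
  "wval \<alpha> (Soft w) = w"
| "wval \<alpha> Hard = \<alpha>"

type_synonym 'a lpmln = "(weight \<times> 'a rule) set"

definition lp_atoms :: "'a lpmln \<Rightarrow> 'a set" where
  "lp_atoms \<Pi> = (\<Union>(w, r)\<in>\<Pi>. set_option (head r) \<union> pos r \<union> neg r)"

definition sat_part :: "'a lpmln \<Rightarrow> 'a set \<Rightarrow> 'a lpmln" where
  "sat_part \<Pi> I = {wr \<in> \<Pi>. sat_rule I (snd wr)}"

definition SM :: "'a lpmln \<Rightarrow> 'a set set" where
  "SM \<Pi> = {I. stable_model (snd ` sat_part \<Pi> I) I}"

definition W :: "'a lpmln \<Rightarrow> real \<Rightarrow> 'a set \<Rightarrow> real" where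
  "W \<Pi> \<alpha> I = (if I \<in> SM \<Pi> then exp (\<Sum>wr\<in>sat_part \<Pi> I. wval \<alpha> (fst wr)) else 0)"

definition P :: "'a lpmln \<Rightarrow> 'a set \<Rightarrow> real" where
  "P \<Pi> I = Lim at_top (\<lambda>\<alpha>::real. W \<Pi> \<alpha> I / (\<Sum>J\<in>SM \<Pi>. W \<Pi> \<alpha> J))"

text \<open>A Bayesian network on Boolean variables Vs: each node v has an ordered (distinct)
  list of parents par v, and cpt v S = P(v = t | par v = S) for S :: bool list of matching length.\<close>
definition bn_wf :: "'v set \<Rightarrow> ('v \<Rightarrow> 'v list) \<Rightarrow> ('v \<Rightarrow> bool list \<Rightarrow> real) \<Rightarrow> bool" where
  "bn_wf Vs par cpt \<longleftrightarrow> finite Vs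
     \<and> (\<forall>v\<in>Vs. set (par v) \<subseteq> Vs \<and> distinct (par v))
     \<and> acyclic {(u, v). v \<in> Vs \<and> u \<in> set (par v)}
     \<and> (\<forall>v\<in>Vs. \<forall>S. length S = length (par v) \<longrightarrow> 0 \<le> cpt v S \<and> cpt v S \<le> 1)"

definition bn_prob :: "'v set \<Rightarrow> ('v \<Rightarrow> 'v list) \<Rightarrow> ('v \<Rightarrow> bool list \<Rightarrow> real) \<Rightarrow> 'v set \<Rightarrow> real" where
  "bn_prob Vs par cpt I =
     (\<Prod>v\<in>Vs. let p = cpt v (map (\<lambda>u. u \<in> I) (par v)) in if v \<in> I then p else 1 - p)"

datatype 'v bnatom = RV 'v | PF 'v "bool list"

definition pf_rules :: "'v \<Rightarrow> bool list \<Rightarrow> real \<Rightarrow> 'v bnatom lpmln" where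
  "pf_rules v S p =
     (if 0 < p \<and> p < 1 then {(Soft (ln (p / (1 - p))), Rule (Some (PF v S)) {} {})}
      else if p = 1 then {(Hard, Rule (Some (PF v S)) {} {})}
      else if p = 0 then {(Hard, Rule None {PF v S} {})}
      else {})"

definition cpt_rule :: "('v \<Rightarrow> 'v list) \<Rightarrow> 'v \<Rightarrow> bool list \<Rightarrow> 'v bnatom rule" where
  "cpt_rule par v S =
     Rule (Some (RV v))
          (insert (PF v S) {RV u | u. (u, True) \<in> set (zip (par v) S)})
          {RV u | u. (u, False) \<in> set (zip (par v) S)}"

definition bn_translation :: "'v set \<Rightarrow> ('v \<Rightarrow> 'v list) \<Rightarrow> ('v \<Rightarrow> bool list \<Rightarrow> real) \<Rightarrow> 'v bnatom lpmln" where
  "bn_translation Vs par cpt =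
     (\<Union>(v, S)\<in>{(v, S). v \<in> Vs \<and> length S = length (par v)}.
        pf_rules v S (cpt v S) \<union> {(Hard, cpt_rule par v S)})"

end

theory Submission
  imports Defs "HOL-Library.FuncSet"
begin

lemma lim_lemma:
  fixes h :: "'a \<Rightarrow> nat" and s :: "'a \<Rightarrow> real"
  assumes M: "finite M" and JM: "J \<in> M" and hle: "\<And>K. K \<in> M \<Longrightarrow> h K \<le> N"
    and Z: "(\<Sum>K\<in>{K\<in>M. h K = N}. exp (s K)) \<noteq> 0"
  shows "((\<lambda>\<alpha>::real. exp (\<alpha> * h J + s J) / (\<Sum>K\<in>M. exp (\<alpha> * h K + s K))) \<longlongrightarrow>
     (if h J = N then exp (s J) else 0) / (\<Sum>K\<in>{K\<in>M. h K = N}. exp (s K))) at_top"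
proof -
  define e where "e K \<alpha> = exp (\<alpha> * (real (h K) - real N) + s K)" for K \<alpha>
  have eq: "exp (\<alpha> * h J + s J) / (\<Sum>K\<in>M. exp (\<alpha> * h K + s K)) = e J \<alpha> / (\<Sum>K\<in>M. e K \<alpha>)" for \<alpha> :: real
  proof -
    have *: "exp (\<alpha> * h K + s K) = exp (\<alpha> * N) * e K \<alpha>" for K
      unfolding e_def by (simp add: exp_add[symmetric] algebra_simps)
    show ?thesis unfolding * sum_distrib_left[symmetric] by simp
  qed
  have lim1: "(e K \<longlongrightarrow> (if h K = N then exp (s K) else 0)) at_top" if "K \<in> M" for K
  proof (cases "h K = N")
    case True then show ?thesis by (simp add: e_def[abs_def])
  next
    case False
    with hle[OF that] have c: "real (h K) - real N < 0" by simp
    have "LIM \<alpha> at_top. (real (h K) - real N) * \<alpha> :> at_bot"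
      by (rule filterlim_tendsto_neg_mult_at_bot[OF tendsto_const c filterlim_ident])
    then have "LIM \<alpha> at_top. s K + (real (h K) - real N) * \<alpha> :> at_bot"
      using filterlim_tendsto_add_at_bot_iff[OF tendsto_const] by blast
    then have "filterlim (\<lambda>\<alpha>. \<alpha> * (real (h K) - real N) + s K) at_bot at_top"
      by (simp add: algebra_simps)
    then have "((\<lambda>\<alpha>. exp (\<alpha> * (real (h K) - real N) + s K)) \<longlongrightarrow> 0) at_top"
      using exp_at_bot filterlim_compose by blast
    then show ?thesis using False by (simp add: e_def[abs_def])
  qed
  have lim2: "((\<lambda>\<alpha>. \<Sum>K\<in>M. e K \<alpha>) \<longlongrightarrow> (\<Sum>K\<in>M. if h K = N then exp (s K) else 0)) at_top"
    by (rule tendsto_sum) (use lim1 in auto)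
  have sumeq: "(\<Sum>K\<in>M. if h K = N then exp (s K) else 0) = (\<Sum>K\<in>{K\<in>M. h K = N}. exp (s K))"
    using M by (simp add: sum.If_cases Int_def conj_commute)
  note limJ = lim1[OF JM]
  show ?thesis unfolding eq using tendsto_divide[OF limJ lim2] Z sumeq by simp
qed

lemma bn_sum_one:
  fixes par :: "'v \<Rightarrow> 'v list" and cpt :: "'v \<Rightarrow> bool list \<Rightarrow> real"
  assumes "finite Vs" "\<forall>v\<in>Vs. set (par v) \<subseteq> Vs" "acyclic {(u,v). v\<in>Vs \<and> u\<in>set (par v)}"
  shows "(\<Sum>I\<in>Pow Vs. \<Prod>v\<in>Vs. let p = cpt v (map (\<lambda>u. u\<in>I) (par v)) in if v\<in>I then p else 1-p) = 1"
  using assms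
proof (induction "card Vs" arbitrary: Vs)
  case 0
  then have "Vs = {}" by simp
  then show ?case by simp
next
  case (Suc n)
  define f where "f v I = (let p = cpt v (map (\<lambda>u. u\<in>I) (par v)) in if v\<in>I then p else 1-p)" for v I
  define E where "E = {(u,v). v\<in>Vs \<and> u\<in>set (par v)}"
  have "E \<subseteq> (\<Union>v\<in>Vs. set (par v)) \<times> Vs" unfolding E_def by auto
  then have "finite E" using Suc.prems(1) by (meson finite_SigmaI finite_UN_I finite_set finite_subset)
  then have wf: "wf (E\<inverse>)" using Suc.prems(3) finite_acyclic_wf_converse unfolding E_def by blast
  from Suc.hyps(2) have "Vs \<noteq> {}" by auto
  then obtain z0 where "z0 \<in> Vs" by blast
  then obtain z where zV: "z \<in> Vs" and zmin: "\<And>y. (y, z) \<in> E\<inverse> \<Longrightarrow> y \<notin> Vs"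
    using wfE_min[OF wf] by metis
  have znp: "z \<notin> set (par y)" if "y \<in> Vs" for y using zmin[of y] that unfolding E_def by auto
  define Vs' where "Vs' = Vs - {z}"
  have Vs: "Vs = insert z Vs'" and zn: "z \<notin> Vs'" using zV unfolding Vs'_def by auto
  have fin': "finite Vs'" using Suc.prems(1) unfolding Vs'_def by simp
  have IH: "(\<Sum>I\<in>Pow Vs'. \<Prod>v\<in>Vs'. f v I) = 1"
    unfolding f_def
  proof (rule Suc.hyps(1))
    show "n = card Vs'" using Suc.hyps(2) zV unfolding Vs'_def by simp
    show "finite Vs'" by (rule fin')
    show "\<forall>v\<in>Vs'. set (par v) \<subseteq> Vs'" using Suc.prems(2) znp unfolding Vs'_def by auto
    show "acyclic {(u, v). v \<in> Vs' \<and> u \<in> set (par v)}"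
      by (rule acyclic_subset[OF Suc.prems(3)]) (auto simp: Vs'_def)
  qed
  have inj: "inj_on (insert z) (Pow Vs')" using zn by (auto simp: inj_on_def)
  have disj: "Pow Vs' \<inter> insert z ` Pow Vs' = {}" using zn by auto
  have "(\<Sum>I\<in>Pow Vs. \<Prod>v\<in>Vs. f v I) = (\<Sum>I\<in>Pow Vs'. \<Prod>v\<in>Vs. f v I) + (\<Sum>I\<in>insert z ` Pow Vs'. \<Prod>v\<in>Vs. f v I)"
    unfolding Vs Pow_insert by (rule sum.union_disjoint) (use fin' disj in auto)
  also have "\<dots> = (\<Sum>I\<in>Pow Vs'. (\<Prod>v\<in>Vs. f v I) + (\<Prod>v\<in>Vs. f v (insert z I)))"
    by (simp add: sum.reindex[OF inj] sum.distrib)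
  also have "\<dots> = (\<Sum>I\<in>Pow Vs'. \<Prod>v\<in>Vs'. f v I)"
  proof (rule sum.cong[OF refl])
    fix I assume I: "I \<in> Pow Vs'"
    have zI: "z \<notin> I" using I zn by auto
    have same: "map (\<lambda>u. u \<in> insert z I) (par v) = map (\<lambda>u. u \<in> I) (par v)" if "v \<in> Vs" for v
      using znp[OF that] by (auto intro!: map_cong)
    have a: "f v (insert z I) = f v I" if "v \<in> Vs'" for v
    proof -
      have v: "v \<in> Vs" "v \<noteq> z" using that by (auto simp: Vs'_def)
      show ?thesis unfolding f_def Let_def same[OF v(1)] using v(2) by simp
    qed
    have b: "f z I + f z (insert z I) = 1"
      unfolding f_def Let_def same[OF zV] using zI by simp
    have "(\<Prod>v\<in>Vs. f v I) + (\<Prod>v\<in>Vs. f v (insert z I)) =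
        (f z I + f z (insert z I)) * (\<Prod>v\<in>Vs'. f v I)"
      unfolding Vs using fin' zn a by (simp add: distrib_right)
    then show "(\<Prod>v\<in>Vs. f v I) + (\<Prod>v\<in>Vs. f v (insert z I)) = (\<Prod>v\<in>Vs'. f v I)"
      using b by simp
  qed
  also have "\<dots> = 1" by (rule IH)
  finally show ?case unfolding f_def .
qed

lemma reduct_mem: "r \<in> R \<Longrightarrow> neg r \<inter> J = {} \<Longrightarrow> Rule (head r) (pos r) {} \<in> reduct R J"
  unfolding reduct_def by blast

lemma model_of_reduct: "\<forall>r\<in>R. sat_rule J r \<Longrightarrow> is_model J (reduct R J)"
  unfolding is_model_def reduct_def sat_rule_def sat_body_def by auto

lemma reduct_fire:
  assumes "is_model K (reduct R J)" "r \<in> R" "neg r \<inter> J = {}" "pos r \<subseteq> K" "head r = Some h"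
  shows "h \<in> K"
  using assms reduct_mem[OF assms(2,3)] unfolding is_model_def sat_rule_def sat_body_def
  by fastforce

lemma stable_supported:
  assumes st: "stable_model R J" and a: "a \<in> J"
  shows "\<exists>r\<in>R. head r = Some a \<and> sat_body J r"
proof (rule ccontr)
  assume nex: "\<not> ?thesis"
  have mod: "is_model J (reduct R J)" using st unfolding stable_model_def by blast
  have "is_model (J - {a}) (reduct R J)"
    unfolding is_model_def
  proof
    fix r' assume r': "r' \<in> reduct R J"
    then obtain r where r: "r \<in> R" "neg r \<inter> J = {}" and r'eq: "r' = Rule (head r) (pos r) {}"
      unfolding reduct_def by blast
    show "sat_rule (J - {a}) r'"
      unfolding sat_rule_def
    proof
      assume b: "sat_body (J - {a}) r'"
      then have "pos r \<subseteq> J" unfolding r'eq sat_body_def by auto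
      then have sbJ: "sat_body J r" using r(2) unfolding sat_body_def by auto
      have "sat_rule J r'" using mod r' unfolding is_model_def by blast
      then obtain h where h: "head r = Some h" "h \<in> J"
        using \<open>pos r \<subseteq> J\<close> unfolding sat_rule_def sat_body_def r'eq by (auto split: option.splits)
      have "h \<noteq> a" using nex r(1) sbJ h(1) by blast
      then show "case head r' of None \<Rightarrow> False | Some h \<Rightarrow> h \<in> J - {a}"
        using h r'eq by simp
    qed
  qed
  moreover have "J - {a} \<subset> J" using a by blast
  ultimately show False using st unfolding stable_model_def by blast
qed

lemma zip_map_self: "(u, b) \<in> set (zip xs (map f xs)) \<longleftrightarrow> u \<in> set xs \<and> b = f u"
  by (induct xs) auto

lemma zip_char:
  assumes "length S = length xs"
  shows "S = map f xs \<longleftrightarrow> (\<forall>u b. (u, b) \<in> set (zip xs S) \<longrightarrow> b = f u)"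
proof
  assume "S = map f xs" then show "\<forall>u b. (u, b) \<in> set (zip xs S) \<longrightarrow> b = f u"
    by (simp add: zip_map_self)
next
  assume H: "\<forall>u b. (u, b) \<in> set (zip xs S) \<longrightarrow> b = f u"
  show "S = map f xs"
  proof (rule nth_equalityI)
    show "length S = length (map f xs)" using assms by simp
    fix i assume "i < length S"
    then have "(xs ! i, S ! i) \<in> set (zip xs S)" using assms by (auto simp: set_zip)
    then show "S ! i = map f xs ! i" using H \<open>i < length S\<close> assms by auto
  qed
qed

locale bnet =
  fixes Vs :: "'v set" and par :: "'v \<Rightarrow> 'v list" and cpt :: "'v \<Rightarrow> bool list \<Rightarrow> real"
  assumes wf: "bn_wf Vs par cpt"
begin

definition PFs :: "('v \<times> bool list) set" where "PFs = {(v,S). v \<in> Vs \<and> length S = length (par v)}"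
abbreviation "PiB \<equiv> bn_translation Vs par cpt"
definition "pfa x = PF (fst x) (snd x)"
definition "pp x = cpt (fst x) (snd x)"
definition "sv J v = map (\<lambda>u. RV u \<in> J) (par v)"
definition "Hd = RV ` Vs \<union> pfa ` {x\<in>PFs. 0 < pp x}"
definition "factR a = Rule (Some a) {} {}"

lemma finVs: "finite Vs" using wf unfolding bn_wf_def by blast

lemma finite_PFs: "finite PFs"
proof -
  have e: "PFs = Sigma Vs (\<lambda>v. {S. length S = length (par v)})" unfolding PFs_def by auto
  have f: "finite {S::bool list. length S = n}" for n
    using finite_lists_length_eq[of "UNIV::bool set" n] by simp
  show ?thesis unfolding e
    apply (rule finite_SigmaI)
     apply (rule finVs)
    using finite_lists_length_eq[of "UNIV::bool set"] apply simp
    done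
qed

lemma cpt_bounds: "\<forall>v\<in>Vs. \<forall>S. length S = length (par v) \<longrightarrow> 0 \<le> cpt v S \<and> cpt v S \<le> 1"
  using wf unfolding bn_wf_def by blast

lemma pp_bounds: "x \<in> PFs \<Longrightarrow> 0 \<le> pp x \<and> pp x \<le> 1"
  using cpt_bounds unfolding PFs_def pp_def by auto

lemma pfa_inj: "pfa x = pfa y \<longleftrightarrow> x = y"
  by (cases x; cases y) (auto simp: pfa_def)

lemma pfa_PF: "PF v S = pfa (v, S)" by (simp add: pfa_def)

lemma Pi_mem: "wr \<in> PiB \<longleftrightarrow> (\<exists>x\<in>PFs. wr = (Hard, cpt_rule par (fst x) (snd x)) \<or> wr \<in> pf_rules (fst x) (snd x) (pp x))"
  unfolding bn_translation_def PFs_def pp_def UN_iff case_prod_beta Un_iff singleton_iff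
  by (rule iffI; elim bexE; rule bexI; assumption?; simp; blast?)

lemma pf_rules_eq: "pf_rules v S p =
     (if 0 < p \<and> p < 1 then {(Soft (ln (p / (1 - p))), factR (PF v S))}
      else if p = 1 then {(Hard, factR (PF v S))}
      else if p = 0 then {(Hard, Rule None {PF v S} {})}
      else {})"
  unfolding pf_rules_def factR_def by simp

lemma finite_Pi: "finite PiB"
proof -
  have "PiB = (\<Union>x\<in>PFs. pf_rules (fst x) (snd x) (pp x) \<union> {(Hard, cpt_rule par (fst x) (snd x))})"
    using Pi_mem by blast
  then show ?thesis by (simp only:) (rule finite_UN_I[OF finite_PFs], simp add: pf_rules_def)
qed

lemma sat_body_cpt:
  assumes "length S = length (par v)"
  shows "sat_body J (cpt_rule par v S) \<longleftrightarrow> PF v S \<in> J \<and> S = sv J v"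
proof -
  let ?Z = "set (zip (par v) S)"
  have 1: "sat_body J (cpt_rule par v S) \<longleftrightarrow> PF v S \<in> J \<and> (\<forall>u. (u,True)\<in>?Z \<longrightarrow> RV u\<in>J) \<and> (\<forall>u. (u,False)\<in>?Z \<longrightarrow> RV u \<notin> J)"
    unfolding sat_body_def cpt_rule_def rule.sel by blast
  have 2: "((\<forall>u. (u,True)\<in>?Z \<longrightarrow> RV u\<in>J) \<and> (\<forall>u. (u,False)\<in>?Z \<longrightarrow> RV u \<notin> J)) \<longleftrightarrow> (\<forall>u b. (u, b) \<in> ?Z \<longrightarrow> b = (RV u \<in> J))"
  proof
    assume H: "(\<forall>u. (u,True)\<in>?Z \<longrightarrow> RV u\<in>J) \<and> (\<forall>u. (u,False)\<in>?Z \<longrightarrow> RV u \<notin> J)"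
    show "\<forall>u b. (u, b) \<in> ?Z \<longrightarrow> b = (RV u \<in> J)"
    proof (intro allI impI)
      fix u b assume ub: "(u, b) \<in> ?Z"
      show "b = (RV u \<in> J)"
      proof (cases b)
        case True
        then have "RV u \<in> J" using H ub by simp
        then show ?thesis using True by simp
      next
        case False
        then have "RV u \<notin> J" using H ub by simp
        then show ?thesis using False by simp
      qed
    qed
  next
    assume H2: "\<forall>u b. (u, b) \<in> ?Z \<longrightarrow> b = (RV u \<in> J)"
    have t: "RV u \<in> J" if "(u,True)\<in>?Z" for u using H2[rule_format, OF that] by simp
    have f: "RV u \<notin> J" if "(u,False)\<in>?Z" for u using H2[rule_format, OF that] by simp
    show "(\<forall>u. (u,True)\<in>?Z \<longrightarrow> RV u\<in>J) \<and> (\<forall>u. (u,False)\<in>?Z \<longrightarrow> RV u \<notin> J)"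
      using t f by blast
  qed
  show ?thesis unfolding sv_def zip_char[OF assms] 1 2 by (rule refl)
qed

end

context bnet begin

lemma heads_of_Pi:
  assumes "(w, r) \<in> PiB" "head r = Some a"
  shows "(\<exists>v S. a = RV v \<and> (v, S) \<in> PFs \<and> r = cpt_rule par v S) \<or>
         (\<exists>x\<in>PFs. a = pfa x \<and> 0 < pp x \<and> r = factR a)"
proof -
  from assms(1) obtain x where x: "x \<in> PFs" and
    c: "(w, r) = (Hard, cpt_rule par (fst x) (snd x)) \<or> (w, r) \<in> pf_rules (fst x) (snd x) (pp x)"
    using Pi_mem by blast
  show ?thesis
  proof (cases "(w, r) = (Hard, cpt_rule par (fst x) (snd x))")
    case True
    then have r: "r = cpt_rule par (fst x) (snd x)" by simp
    then have "a = RV (fst x)" using assms(2) by (simp add: cpt_rule_def)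
    then show ?thesis using r x by (intro disjI1 exI[of _ "fst x"] exI[of _ "snd x"]) simp
  next
    case False
    then have m: "(w, r) \<in> pf_rules (fst x) (snd x) (pp x)" using c by blast
    have "r = factR (pfa x) \<and> 0 < pp x"
    proof (cases "0 < pp x \<and> pp x < 1")
      case True then show ?thesis using m by (simp add: pf_rules_eq pfa_def)
    next
      case F1: False
      show ?thesis
      proof (cases "pp x = 1")
        case True then show ?thesis using m by (simp add: pf_rules_eq pfa_def)
      next
        case False
        then have "pp x = 0" using F1 pp_bounds[OF x] by auto
        then have "r = Rule None {PF (fst x) (snd x)} {}" using m by (simp add: pf_rules_eq)
        then show ?thesis using assms(2) by simp
      qed
    qed
    moreover then have "a = pfa x" using assms(2) by (simp add: factR_def)
    ultimately show ?thesis using x by blast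
  qed
qed

lemma SM_sub:
  assumes "J \<in> SM PiB"
  shows "J \<subseteq> Hd" and "RV v \<in> J \<Longrightarrow> PF v (sv J v) \<in> J"
proof -
  have st: "stable_model (snd ` sat_part PiB J) J" using assms unfolding SM_def by blast
  have sup: "\<exists>w r. (w, r) \<in> PiB \<and> head r = Some a \<and> sat_body J r" if "a \<in> J" for a
    using stable_supported[OF st that] unfolding sat_part_def by force
  show "J \<subseteq> Hd"
  proof
    fix a assume "a \<in> J"
    then obtain w r where "(w, r) \<in> PiB" "head r = Some a" using sup by blast
    then show "a \<in> Hd" using heads_of_Pi unfolding Hd_def PFs_def by blast
  qed
  assume "RV v \<in> J"
  then obtain w r where wr: "(w, r) \<in> PiB" "head r = Some (RV v)" "sat_body J r" using sup by blast
  then obtain S where "(v, S) \<in> PFs" "r = cpt_rule par v S"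
    using heads_of_Pi[OF wr(1,2)] by (auto simp: pfa_def)
  then show "PF v (sv J v) \<in> J" using wr(3) sat_body_cpt unfolding PFs_def by auto
qed

definition "good J \<longleftrightarrow> J \<subseteq> Hd \<and> (\<forall>v\<in>Vs. RV v \<in> J \<longleftrightarrow> PF v (sv J v) \<in> J) \<and> (\<forall>x\<in>PFs. pp x = 1 \<longrightarrow> pfa x \<in> J)"
definition "allhard J \<longleftrightarrow> (\<forall>wr\<in>PiB. fst wr = Hard \<longrightarrow> sat_rule J (snd wr))"

lemma sv_len: "length (sv J v) = length (par v)" by (simp add: sv_def)

lemma cpt_in: "v \<in> Vs \<Longrightarrow> (Hard, cpt_rule par v (sv J v)) \<in> PiB"
  using Pi_mem[of "(Hard, cpt_rule par v (sv J v))"] sv_len unfolding PFs_def by force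

lemma fact1_in: "x \<in> PFs \<Longrightarrow> pp x = 1 \<Longrightarrow> (Hard, factR (pfa x)) \<in> PiB"
proof -
  assume x: "x \<in> PFs" "pp x = 1"
  then have "(Hard, factR (pfa x)) \<in> pf_rules (fst x) (snd x) (pp x)" by (simp add: pf_rules_eq pfa_def)
  then show ?thesis using Pi_mem x by blast
qed

lemma factpos_in: "x \<in> PFs \<Longrightarrow> 0 < pp x \<Longrightarrow> \<exists>w. (w, factR (pfa x)) \<in> PiB"
proof -
  assume x: "x \<in> PFs" "0 < pp x"
  show ?thesis
  proof (cases "pp x = 1")
    case True then show ?thesis using fact1_in x by blast
  next
    case False
    then have "(Soft (ln (pp x / (1 - pp x))), factR (pfa x)) \<in> pf_rules (fst x) (snd x) (pp x)"
      using pp_bounds[OF x(1)] x(2) by (simp add: pf_rules_eq pfa_def)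
    then show ?thesis using Pi_mem x by blast
  qed
qed

lemma Hd_PF: "PF v S \<in> Hd \<longleftrightarrow> (v, S) \<in> PFs \<and> 0 < pp (v, S)"
  unfolding Hd_def pfa_def by force

lemma Hd_RV: "RV v \<in> Hd \<longleftrightarrow> v \<in> Vs"
  unfolding Hd_def pfa_def by auto

lemma head_cpt[simp]: "head (cpt_rule par v S) = Some (RV v)" by (simp add: cpt_rule_def)
lemma pos_cpt: "pos (cpt_rule par v S) = insert (PF v S) {RV u | u. (u, True) \<in> set (zip (par v) S)}"
  by (simp add: cpt_rule_def)
lemma neg_cpt: "neg (cpt_rule par v S) = {RV u | u. (u, False) \<in> set (zip (par v) S)}"
  by (simp add: cpt_rule_def)
lemma sat_fact[simp]: "sat_rule J (factR a) \<longleftrightarrow> a \<in> J" by (simp add: sat_rule_def sat_body_def factR_def)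
lemma head_fact[simp]: "head (factR a) = Some a" "pos (factR a) = {}" "neg (factR a) = {}" by (simp_all add: factR_def)
lemma acyc: "acyclic {(u, v). v \<in> Vs \<and> u \<in> set (par v)}" using wf unfolding bn_wf_def by blast
lemma sat_cpt_iff: "length S = length (par v) \<Longrightarrow> sat_rule J (cpt_rule par v S) \<longleftrightarrow> (PF v S \<in> J \<and> S = sv J v \<longrightarrow> RV v \<in> J)"
  unfolding sat_rule_def by (simp add: sat_body_cpt)

lemma good_SM: assumes "good J" shows "J \<in> SM PiB" and "allhard J"
proof -
  have JH: "J \<subseteq> Hd" and cons: "\<And>v. v \<in> Vs \<Longrightarrow> RV v \<in> J \<longleftrightarrow> PF v (sv J v) \<in> J"
    and one: "\<And>x. x \<in> PFs \<Longrightarrow> pp x = 1 \<Longrightarrow> pfa x \<in> J"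
    using assms unfolding good_def by auto
  show "allhard J" unfolding allhard_def
  proof (intro ballI impI)
    fix wr assume wr: "wr \<in> PiB" "fst wr = Hard"
    then obtain x where x: "x \<in> PFs" and
      c: "wr = (Hard, cpt_rule par (fst x) (snd x)) \<or> wr \<in> pf_rules (fst x) (snd x) (pp x)"
      using Pi_mem by blast
    obtain v S where xe: "x = (v, S)" by (cases x)
    show "sat_rule J (snd wr)"
    proof (cases "wr = (Hard, cpt_rule par (fst x) (snd x))")
      case True
      have len: "length S = length (par v)" and v: "v \<in> Vs" using x xe unfolding PFs_def by auto
      have "sat_rule J (cpt_rule par v S)" unfolding sat_cpt_iff[OF len] using cons[OF v] by blast
      then show ?thesis using True xe by simp
    next
      case False
      then have m: "wr \<in> pf_rules v S (pp x)" using c xe by simp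
      show ?thesis
      proof (cases "0 < pp x \<and> pp x < 1")
        case True then show ?thesis using m wr(2) by (simp add: pf_rules_eq)
      next
        case F1: False
        show ?thesis
        proof (cases "pp x = 1")
          case True
          then have "wr = (Hard, factR (pfa x))" using m by (simp add: pf_rules_eq xe pfa_def)
          then show ?thesis using one[OF x True] by simp
        next
          case False
          then have p0: "pp x = 0" using F1 pp_bounds[OF x] by auto
          then have "wr = (Hard, Rule None {PF v S} {})" using m by (simp add: pf_rules_eq)
          moreover have "PF v S \<notin> J" using JH Hd_PF[of v S] p0 xe by auto
          ultimately show ?thesis by (simp add: sat_rule_def sat_body_def)
        qed
      qed
    qed
  qed
  let ?R = "snd ` sat_part PiB J"
  have satR: "\<forall>r\<in>?R. sat_rule J r" unfolding sat_part_def by auto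
  have inR: "r \<in> ?R" if "(w, r) \<in> PiB" "sat_rule J r" for w r
  proof -
    have "(w, r) \<in> sat_part PiB J" using that unfolding sat_part_def by simp
    then show ?thesis by (metis image_eqI snd_conv)
  qed
  show "J \<in> SM PiB" unfolding SM_def stable_model_def
  proof (intro CollectI conjI allI impI)
    show "is_model J (reduct ?R J)" using model_of_reduct[OF satR] .
    fix K assume KJ: "K \<subset> J"
    show "\<not> is_model K (reduct ?R J)"
    proof
      assume Km: "is_model K (reduct ?R J)"
      have PFK: "PF v S \<in> K" if "PF v S \<in> J" for v S
      proof -
        have "(v, S) \<in> PFs" "0 < pp (v, S)" using that JH Hd_PF by auto
        then obtain w where "(w, factR (pfa (v, S))) \<in> PiB" using factpos_in by blast
        moreover have "sat_rule J (factR (pfa (v, S)))" using that by (simp add: pfa_def)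
        ultimately have "factR (pfa (v, S)) \<in> ?R" using inR by blast
        then have "pfa (v, S) \<in> K" using reduct_fire[OF Km, of "factR (pfa (v, S))"] by simp
        then show ?thesis by (simp add: pfa_def)
      qed
      define E where "E = {(u, v). v \<in> Vs \<and> u \<in> set (par v)}"
      have "E \<subseteq> (\<Union>v\<in>Vs. set (par v)) \<times> Vs" unfolding E_def by auto
      then have "finite E" using finVs by (meson finite_SigmaI finite_UN_I finite_set finite_subset)
      then have wfE: "wf E" using acyc finite_acyclic_wf unfolding E_def by blast
      have RVK: "RV v \<in> J \<longrightarrow> RV v \<in> K" for v
      proof (induction v rule: wf_induct[OF wfE])
        case (1 v)
        show ?case
        proof
          assume vJ: "RV v \<in> J"
          then have v: "v \<in> Vs" using JH Hd_RV by auto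
          have pfJ: "PF v (sv J v) \<in> J" using cons[OF v] vJ by blast
          let ?r = "cpt_rule par v (sv J v)"
          have "sat_rule J ?r" unfolding sat_cpt_iff[OF sv_len] using vJ by blast
          then have rR: "?r \<in> ?R" using inR[OF cpt_in[OF v]] by blast
          have zc: "\<forall>u b. (u, b) \<in> set (zip (par v) (sv J v)) \<longrightarrow> b = (RV u \<in> J)"
            using zip_char[OF sv_len[of J v], where f="\<lambda>u. RV u \<in> J"] unfolding sv_def by blast
          have neg: "neg ?r \<inter> J = {}"
          proof (rule ccontr)
            assume "neg ?r \<inter> J \<noteq> {}"
            then obtain u where "(u, False) \<in> set (zip (par v) (sv J v))" "RV u \<in> J"
              unfolding neg_cpt by blast
            then show False using zc by blast
          qed
          have pos: "pos ?r \<subseteq> K"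
          proof
            fix a assume "a \<in> pos ?r"
            then consider "a = PF v (sv J v)" | u where "a = RV u" "(u, True) \<in> set (zip (par v) (sv J v))"
              unfolding pos_cpt by blast
            then show "a \<in> K"
            proof cases
              case 1 then show ?thesis using PFK pfJ by simp
            next
              case (2 u)
              have "u \<in> set (par v)" using 2(2) by (rule set_zip_leftD)
              moreover have "RV u \<in> J" using zc 2(2) by blast
              moreover have "(u, v) \<in> E" unfolding E_def using v \<open>u \<in> set (par v)\<close> by simp
              ultimately show ?thesis using 1 2(1) by blast
            qed
          qed
          show "RV v \<in> K" using reduct_fire[OF Km rR neg pos] by simp
        qed
      qed
      have "J \<subseteq> K"
      proof
        fix a assume "a \<in> J" then show "a \<in> K" using RVK PFK by (cases a) auto
      qed
      then show False using KJ by blast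
    qed
  qed
qed

lemma good_iff: "good J \<longleftrightarrow> J \<in> SM PiB \<and> allhard J"
proof
  assume "good J" then show "J \<in> SM PiB \<and> allhard J" using good_SM by blast
next
  assume a: "J \<in> SM PiB \<and> allhard J"
  then have ah: "\<forall>wr\<in>PiB. fst wr = Hard \<longrightarrow> sat_rule J (snd wr)" unfolding allhard_def by blast
  have c1: "RV v \<in> J" if v: "v \<in> Vs" and pf: "PF v (sv J v) \<in> J" for v
  proof -
    have "sat_rule J (cpt_rule par v (sv J v))" using ah cpt_in[OF v] by fastforce
    then show ?thesis unfolding sat_cpt_iff[OF sv_len] using pf by blast
  qed
  have c2: "pfa x \<in> J" if "x \<in> PFs" "pp x = 1" for x
  proof -
    have "sat_rule J (factR (pfa x))" using ah fact1_in[OF that] by fastforce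
    then show ?thesis by simp
  qed
  have "J \<subseteq> Hd" using SM_sub(1) a by blast
  moreover have "\<forall>v\<in>Vs. RV v \<in> J \<longleftrightarrow> PF v (sv J v) \<in> J" using SM_sub(2) a c1 by blast
  ultimately show "good J" unfolding good_def using c2 by blast
qed

lemma finite_Hd: "finite Hd" unfolding Hd_def using finVs finite_PFs by (intro finite_UnI finite_imageI) auto

lemma finite_SM: "finite (SM PiB)"
proof (rule finite_subset)
  show "SM PiB \<subseteq> Pow Hd" using SM_sub(1) by blast
  show "finite (Pow Hd)" using finite_Hd by simp
qed

lemma head_atoms: "(w, r) \<in> PiB \<Longrightarrow> head r = Some a \<Longrightarrow> a \<in> lp_atoms PiB"
  unfolding lp_atoms_def by (rule UN_I[of "(w, r)"]) auto

lemma Hd_atoms: "Hd \<subseteq> lp_atoms PiB"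
proof
  fix a assume "a \<in> Hd"
  then consider v where "a = RV v" "v \<in> Vs" | x where "a = pfa x" "x \<in> PFs" "0 < pp x" unfolding Hd_def by blast
  then show "a \<in> lp_atoms PiB"
  proof cases
    case 1 then show ?thesis using head_atoms[OF cpt_in[of v "{}"]] by simp
  next
    case 2
    then obtain w where "(w, factR (pfa x)) \<in> PiB" using factpos_in by blast
    then show ?thesis using head_atoms 2(1) by fastforce
  qed
qed

end

context bnet begin

definition "HardS = {wr::weight \<times> 'v bnatom rule. fst wr = Hard}"
definition "hc J = card (sat_part PiB J \<inter> HardS)"
definition "sc J = sum (\<lambda>wr. wval 0 (fst wr)) (sat_part PiB J - HardS)"
definition "NH = card (PiB \<inter> HardS)"
definition "Mid = {x\<in>PFs. 0 < pp x \<and> pp x < 1}"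
definition "qq J = (\<Prod>x\<in>PFs. if pfa x \<in> J then pp x else 1 - pp x)"
definition "CC = (\<Prod>x\<in>Mid. 1 - pp x)"

lemma fin_sat: "finite (sat_part PiB J)"
  using finite_Pi unfolding sat_part_def by simp

lemma W_eq: "J \<in> SM PiB \<Longrightarrow> W PiB \<alpha> J = exp (\<alpha> * real (hc J) + sc J)"
proof -
  assume J: "J \<in> SM PiB"
  let ?A = "sat_part PiB J"
  have "(\<Sum>wr\<in>?A. wval \<alpha> (fst wr)) = (\<Sum>wr\<in>?A \<inter> HardS. wval \<alpha> (fst wr)) + (\<Sum>wr\<in>?A - HardS. wval \<alpha> (fst wr))"
    by (rule sum.Int_Diff[OF fin_sat])
  also have "(\<Sum>wr\<in>?A \<inter> HardS. wval \<alpha> (fst wr)) = (\<Sum>wr\<in>?A \<inter> HardS. \<alpha>)"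
    by (rule sum.cong) (auto simp: HardS_def)
  also have "(\<Sum>wr\<in>?A - HardS. wval \<alpha> (fst wr)) = sc J"
    unfolding sc_def
  proof (rule sum.cong[OF refl])
    fix wr assume "wr \<in> ?A - HardS"
    then show "wval \<alpha> (fst wr) = wval 0 (fst wr)" by (cases "fst wr") (auto simp: HardS_def)
  qed
  finally show ?thesis using J unfolding W_def hc_def by (simp add: mult.commute)
qed

lemma hc_le: "hc J \<le> NH"
  unfolding hc_def NH_def using finite_Pi by (intro card_mono) (auto simp: sat_part_def)

lemma hc_N: "hc J = NH \<longleftrightarrow> allhard J"
proof
  assume "hc J = NH"
  then have "sat_part PiB J \<inter> HardS = PiB \<inter> HardS"
    unfolding hc_def NH_def using finite_Pi by (intro card_subset_eq) (auto simp: sat_part_def)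
  then show "allhard J" unfolding allhard_def sat_part_def HardS_def by blast
next
  assume "allhard J"
  then have "sat_part PiB J \<inter> HardS = PiB \<inter> HardS"
    unfolding allhard_def sat_part_def HardS_def by blast
  then show "hc J = NH" unfolding hc_def NH_def by simp
qed

lemma soft_part: "sat_part PiB J - HardS =
   (\<lambda>x. (Soft (ln (pp x / (1 - pp x))), factR (pfa x))) ` {x\<in>Mid. pfa x \<in> J}"
proof (intro equalityI subsetI)
  fix wr assume "wr \<in> sat_part PiB J - HardS"
  then have wr: "wr \<in> PiB" "fst wr \<noteq> Hard" "sat_rule J (snd wr)" unfolding sat_part_def HardS_def by auto
  then obtain x where x: "x \<in> PFs" and "wr \<in> pf_rules (fst x) (snd x) (pp x)"
    using Pi_mem by auto
  then have "0 < pp x \<and> pp x < 1" "wr = (Soft (ln (pp x / (1 - pp x))), factR (pfa x))"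
    using wr(2) by (auto simp: pf_rules_eq pfa_def split: if_splits)
  then show "wr \<in> (\<lambda>x. (Soft (ln (pp x / (1 - pp x))), factR (pfa x))) ` {x\<in>Mid. pfa x \<in> J}"
    using wr(3) x unfolding Mid_def by (auto simp: sat_rule_def sat_body_def factR_def)
next
  fix wr assume "wr \<in> (\<lambda>x. (Soft (ln (pp x / (1 - pp x))), factR (pfa x))) ` {x\<in>Mid. pfa x \<in> J}"
  then obtain x where x: "x \<in> Mid" "pfa x \<in> J" and wr: "wr = (Soft (ln (pp x / (1 - pp x))), factR (pfa x))"
    by blast
  have "wr \<in> pf_rules (fst x) (snd x) (pp x)" using x(1) wr unfolding Mid_def by (simp add: pf_rules_eq pfa_def)
  then have "wr \<in> PiB" using Pi_mem x(1) unfolding Mid_def by blast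
  then show "wr \<in> sat_part PiB J - HardS"
    using x(2) wr unfolding sat_part_def HardS_def by (simp add: sat_rule_def factR_def)
qed

lemma sc_eq: "sc J = (\<Sum>x\<in>{x\<in>Mid. pfa x \<in> J}. ln (pp x / (1 - pp x)))"
proof -
  have inj: "inj_on (\<lambda>x. (Soft (ln (pp x / (1 - pp x))), factR (pfa x))) {x\<in>Mid. pfa x \<in> J}"
    by (auto simp: inj_on_def factR_def pfa_inj)
  show ?thesis unfolding sc_def soft_part sum.reindex[OF inj] by simp
qed

lemma finite_Mid: "finite Mid" unfolding Mid_def using finite_PFs by simp

lemma exp_sc: "exp (sc J) = (\<Prod>x\<in>{x\<in>Mid. pfa x \<in> J}. pp x / (1 - pp x))"
  unfolding sc_eq using finite_Mid
  by (simp add: exp_sum) (rule prod.cong, auto simp: Mid_def)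

lemma CC_pos: "CC > 0"
  unfolding CC_def by (rule prod_pos) (auto simp: Mid_def)

lemma q_eq: assumes "good J" shows "qq J = CC * exp (sc J)"
proof -
  have JH: "J \<subseteq> Hd" and one: "\<And>x. x \<in> PFs \<Longrightarrow> pp x = 1 \<Longrightarrow> pfa x \<in> J"
    using assms unfolding good_def by auto
  let ?f = "\<lambda>x. if pfa x \<in> J then pp x else 1 - pp x"
  have MP: "Mid \<subseteq> PFs" unfolding Mid_def by auto
  have "qq J = (\<Prod>x\<in>Mid. ?f x) * (\<Prod>x\<in>PFs - Mid. ?f x)"
    unfolding qq_def using prod.subset_diff[OF MP finite_PFs] by (simp add: mult.commute)
  also have "(\<Prod>x\<in>PFs - Mid. ?f x) = 1"
  proof (rule prod.neutral, rule ballI)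
    fix x assume x: "x \<in> PFs - Mid"
    then have "pp x = 0 \<or> pp x = 1" using pp_bounds[of x] unfolding Mid_def by auto
    moreover have "pfa x \<notin> J" if "pp x = 0"
    proof
      assume "pfa x \<in> J" then have "pfa x \<in> Hd" using JH by blast
      then show False using that Hd_PF[of "fst x" "snd x"] by (simp add: pfa_def)
    qed
    moreover have xP: "x \<in> PFs" using x by blast
    ultimately show "?f x = 1" using one[OF xP] by auto
  qed
  also have "(\<Prod>x\<in>Mid. ?f x) = (\<Prod>x\<in>Mid. (1 - pp x) * (if pfa x \<in> J then pp x / (1 - pp x) else 1))"
    by (rule prod.cong) (auto simp: Mid_def)
  also have "\<dots> = CC * (\<Prod>x\<in>Mid. if pfa x \<in> J then pp x / (1 - pp x) else 1)"
    unfolding CC_def prod.distrib ..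
  also have "(\<Prod>x\<in>Mid. if pfa x \<in> J then pp x / (1 - pp x) else 1) = exp (sc J)"
    unfolding exp_sc prod.inter_filter[OF finite_Mid] ..
  finally show ?thesis by simp
qed

end

lemma sum_bool_set: "sum g (A::bool set) = (if True \<in> A then g True else 0) + (if False \<in> A then g False else 0)"
proof -
  have "A = {x\<in>{True, False}. x \<in> A}" by auto
  then have "sum g A = (\<Sum>x\<in>{True, False}. if x \<in> A then g x else 0)"
    using sum.inter_filter[of "{True, False}" g "\<lambda>x. x \<in> A"] by simp
  then show ?thesis by simp
qed

context bnet begin

lemma key:
  assumes I': "I' \<subseteq> Vs"
  shows "(\<Sum>J\<in>{J. good J \<and> {v. RV v \<in> J} = I'}. qq J) = bn_prob Vs par cpt I'"
proof -
  define sv0 where "sv0 v = map (\<lambda>u. u \<in> I') (par v)" for v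
  define D where "D = (\<lambda>v. (v, sv0 v)) ` Vs"
  define Al where "Al x = {b. (x \<in> D \<longrightarrow> b = (fst x \<in> I')) \<and> (pp x = 0 \<longrightarrow> \<not> b) \<and> (pp x = 1 \<longrightarrow> b)}" for x
  define mk where "mk g = RV ` I' \<union> pfa ` {x\<in>PFs. g x}" for g
  define f where "f x b = (if b then pp x else 1 - pp x)" for x b
  have DP: "D \<subseteq> PFs" unfolding D_def PFs_def sv0_def by auto
  have e: "{x \<in> PFs. x \<in> D} = D" using DP by blast
  have pfa_mk: "pfa x \<in> mk g \<longleftrightarrow> g x" if "x \<in> PFs" for x g
    using that unfolding mk_def by (auto simp: pfa_inj) (auto simp: pfa_def)
  have RV_mk: "RV v \<in> mk g \<longleftrightarrow> v \<in> I'" for v g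
    unfolding mk_def by (auto simp: pfa_def)
  have sv_mk: "sv (mk g) v = sv0 v" for g v
    unfolding sv_def sv0_def RV_mk ..
  have img: "{J. good J \<and> {v. RV v \<in> J} = I'} = mk ` PiE PFs Al"
  proof (intro equalityI subsetI)
    fix J assume "J \<in> {J. good J \<and> {v. RV v \<in> J} = I'}"
    then have g: "good J" and RVJ: "\<And>v. RV v \<in> J \<longleftrightarrow> v \<in> I'" by auto
    have JH: "J \<subseteq> Hd" and cons: "\<And>v. v \<in> Vs \<Longrightarrow> RV v \<in> J \<longleftrightarrow> PF v (sv J v) \<in> J"
      and one: "\<And>x. x \<in> PFs \<Longrightarrow> pp x = 1 \<Longrightarrow> pfa x \<in> J"
      using g unfolding good_def by auto
    have svJ: "sv J v = sv0 v" for v unfolding sv_def sv0_def RVJ ..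
    define g0 where "g0 = restrict (\<lambda>x. pfa x \<in> J) PFs"
    have "g0 \<in> PiE PFs Al"
    proof (rule PiE_I)
      fix x assume x: "x \<in> PFs"
      have "pfa x \<notin> J" if "pp x = 0"
      proof
        assume "pfa x \<in> J" then have "pfa x \<in> Hd" using JH by blast
        then show False using that Hd_PF[of "fst x" "snd x"] by (simp add: pfa_def)
      qed
      moreover have "pfa x \<in> J \<longleftrightarrow> fst x \<in> I'" if "x \<in> D"
      proof -
        from that obtain v where v: "v \<in> Vs" "x = (v, sv0 v)" unfolding D_def by blast
        show ?thesis using cons[OF v(1)] RVJ v(2) svJ by (simp add: pfa_def)
      qed
      ultimately show "g0 x \<in> Al x" using x one unfolding g0_def Al_def by auto
    next
      fix x assume "x \<notin> PFs" then show "g0 x = undefined" unfolding g0_def by simp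
    qed
    moreover have "J = mk g0"
    proof (intro equalityI subsetI)
      fix a assume a: "a \<in> J"
      then have "a \<in> Hd" using JH by blast
      then consider v where "a = RV v" | x where "a = pfa x" "x \<in> PFs" unfolding Hd_def by blast
      then show "a \<in> mk g0"
      proof cases
        case 1 then show ?thesis using a RVJ RV_mk by auto
      next
        case 2 then show ?thesis using a pfa_mk unfolding g0_def by auto
      qed
    next
      fix a assume "a \<in> mk g0"
      then consider v where "a = RV v" "v \<in> I'" | x where "a = pfa x" "x \<in> PFs" "g0 x"
        unfolding mk_def by blast
      then show "a \<in> J"
      proof cases
        case 1 then show ?thesis using RVJ by auto
      next
        case 2 then show ?thesis unfolding g0_def by auto
      qed
    qed
    ultimately show "J \<in> mk ` PiE PFs Al" by blast
  next
    fix J assume "J \<in> mk ` PiE PFs Al"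
    then obtain g where g: "g \<in> PiE PFs Al" and J: "J = mk g" by blast
    have gA: "g x \<in> Al x" if "x \<in> PFs" for x using g that by auto
    have "J \<subseteq> Hd"
    proof
      fix a assume "a \<in> J"
      then consider v where "a = RV v" "v \<in> I'" | x where "a = pfa x" "x \<in> PFs" "g x"
        unfolding J mk_def by blast
      then show "a \<in> Hd"
      proof cases
        case 1 then show ?thesis using I' Hd_RV by auto
      next
        case 2
        then have "pp x \<noteq> 0" using gA[of x] unfolding Al_def by auto
        then have "0 < pp x" using pp_bounds[OF 2(2)] by auto
        then show ?thesis using 2 unfolding Hd_def by auto
      qed
    qed
    moreover have "RV v \<in> J \<longleftrightarrow> PF v (sv J v) \<in> J" if v: "v \<in> Vs" for v
    proof -
      have x: "(v, sv0 v) \<in> PFs" "(v, sv0 v) \<in> D" using v unfolding D_def PFs_def sv0_def by auto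
      have "PF v (sv J v) \<in> J \<longleftrightarrow> g (v, sv0 v)" unfolding J sv_mk pfa_PF using pfa_mk[OF x(1)] .
      also have "\<dots> \<longleftrightarrow> v \<in> I'" using gA[OF x(1)] x(2) unfolding Al_def by auto
      finally show ?thesis unfolding J RV_mk by simp
    qed
    moreover have "pfa x \<in> J" if "x \<in> PFs" "pp x = 1" for x
      using gA[OF that(1)] that unfolding J pfa_mk[OF that(1)] Al_def by auto
    moreover have "{v. RV v \<in> J} = I'" unfolding J RV_mk by simp
    ultimately show "J \<in> {J. good J \<and> {v. RV v \<in> J} = I'}" unfolding good_def by auto
  qed
  have inj: "inj_on mk (PiE PFs Al)"
  proof (rule inj_onI)
    fix g1 g2 assume g: "g1 \<in> PiE PFs Al" "g2 \<in> PiE PFs Al" "mk g1 = mk g2"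
    have "\<forall>x\<in>PFs. g1 x = g2 x" using pfa_mk g(3) by metis
    then show "g1 = g2" using g(1,2) by (auto intro: PiE_ext)
  qed
  have "(\<Sum>J\<in>{J. good J \<and> {v. RV v \<in> J} = I'}. qq J) = (\<Sum>g\<in>PiE PFs Al. qq (mk g))"
    unfolding img sum.reindex[OF inj] by simp
  also have "\<dots> = (\<Sum>g\<in>PiE PFs Al. \<Prod>x\<in>PFs. f x (g x))"
    unfolding qq_def f_def by (intro sum.cong refl prod.cong) (auto simp: pfa_mk)
  also have "\<dots> = (\<Prod>x\<in>PFs. \<Sum>b\<in>Al x. f x b)"
    by (rule prod_sum_PiE[symmetric]) (use finite_PFs in auto)
  also have "\<dots> = (\<Prod>x\<in>PFs. if x \<in> D then (if fst x \<in> I' then pp x else 1 - pp x) else 1)"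
  proof (rule prod.cong[OF refl])
    fix x assume "x \<in> PFs"
    show "(\<Sum>b\<in>Al x. f x b) = (if x \<in> D then (if fst x \<in> I' then pp x else 1 - pp x) else 1)"
      unfolding sum_bool_set Al_def f_def by auto
  qed
  also have "\<dots> = (\<Prod>x\<in>D. if fst x \<in> I' then pp x else 1 - pp x)"
    using prod.inter_filter[OF finite_PFs, of "\<lambda>x. if fst x \<in> I' then pp x else 1 - pp x" "\<lambda>x. x \<in> D"] DP
    unfolding e by simp
  also have "\<dots> = (\<Prod>v\<in>Vs. if v \<in> I' then pp (v, sv0 v) else 1 - pp (v, sv0 v))"
    unfolding D_def by (subst prod.reindex) (auto simp: inj_on_def)
  also have "\<dots> = bn_prob Vs par cpt I'"
    unfolding bn_prob_def sv0_def Let_def pp_def fst_conv snd_conv ..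
  finally show ?thesis .
qed

end

context bnet begin

lemma atoms_sub: "lp_atoms PiB \<subseteq> RV ` Vs \<union> pfa ` PFs"
proof
  fix a assume "a \<in> lp_atoms PiB"
  then obtain w r where wr: "(w, r) \<in> PiB" and a: "a \<in> set_option (head r) \<union> pos r \<union> neg r"
    unfolding lp_atoms_def by blast
  from wr obtain x where x: "x \<in> PFs" and
    c: "(w, r) = (Hard, cpt_rule par (fst x) (snd x)) \<or> (w, r) \<in> pf_rules (fst x) (snd x) (pp x)"
    using Pi_mem by blast
  obtain v S where xe: "x = (v, S)" by (cases x)
  have v: "v \<in> Vs" using x xe unfolding PFs_def by auto
  have parV: "set (par v) \<subseteq> Vs" using wf v unfolding bn_wf_def by blast
  show "a \<in> RV ` Vs \<union> pfa ` PFs"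
  proof (cases "(w, r) = (Hard, cpt_rule par (fst x) (snd x))")
    case True
    then have r: "r = cpt_rule par v S" using xe by simp
    from a consider "a = RV v" | "a = PF v S" | u b where "a = RV u" "(u, b) \<in> set (zip (par v) S)"
      unfolding r pos_cpt neg_cpt by auto
    then show ?thesis
    proof cases
      case 1 then show ?thesis using v by blast
    next
      case 2 then show ?thesis using x xe unfolding pfa_PF by blast
    next
      case (3 u b)
      then have "u \<in> Vs" using parV by (auto dest: set_zip_leftD)
      then show ?thesis using 3 by blast
    qed
  next
    case False
    then have m: "(w, r) \<in> pf_rules v S (pp x)" using c xe by auto
    then have "a = PF v S" using a by (auto simp: pf_rules_eq factR_def split: if_splits)
    then show ?thesis using x xe unfolding pfa_PF by blast
  qed
qed

lemma finite_atoms: "finite (lp_atoms PiB)"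
  by (rule finite_subset[OF atoms_sub]) (use finVs finite_PFs in simp)

lemma good_RV: "good J \<Longrightarrow> {v. RV v \<in> J} \<subseteq> Vs"
  unfolding good_def using Hd_RV by blast

lemma main:
  assumes I: "I \<subseteq> Vs"
  shows "bn_prob Vs par cpt I = (\<Sum>J\<in>{J. J \<subseteq> lp_atoms PiB \<and> {v. RV v \<in> J} = I}. P PiB J)"
proof -
  define Gd where "Gd = {J. good J}"
  have GdSM: "Gd \<subseteq> SM PiB" unfolding Gd_def using good_iff by blast
  have finGd: "finite Gd" using finite_subset[OF GdSM finite_SM] .
  have GdEq: "{K \<in> SM PiB. hc K = NH} = Gd" unfolding Gd_def using good_iff hc_N by blast
  have "(\<Sum>J\<in>Gd. qq J) = (\<Sum>I'\<in>Pow Vs. \<Sum>J\<in>{J. J \<in> Gd \<and> {v. RV v \<in> J} = I'}. qq J)"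
    by (rule sum.group[symmetric]) (use finGd finVs good_RV in \<open>auto simp: Gd_def\<close>)
  also have "\<dots> = (\<Sum>I'\<in>Pow Vs. bn_prob Vs par cpt I')"
    by (rule sum.cong[OF refl]) (use key in \<open>auto simp: Gd_def\<close>)
  also have "\<dots> = 1" unfolding bn_prob_def
    by (rule bn_sum_one[OF finVs _ acyc]) (use wf in \<open>auto simp: bn_wf_def\<close>)
  finally have sq: "(\<Sum>J\<in>Gd. qq J) = 1" .
  have "(\<Sum>J\<in>Gd. qq J) = CC * (\<Sum>J\<in>Gd. exp (sc J))"
    unfolding sum_distrib_left by (rule sum.cong[OF refl]) (simp add: q_eq Gd_def)
  then have Zeq: "(\<Sum>J\<in>Gd. exp (sc J)) = 1 / CC" using sq CC_pos by (simp add: field_simps)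
  define Z where "Z = (\<Sum>J\<in>Gd. exp (sc J))"
  have Z0: "Z \<noteq> 0" using Zeq CC_pos unfolding Z_def by simp
  have Peq: "P PiB J = (if good J then exp (sc J) else 0) / Z" for J
  proof (cases "J \<in> SM PiB")
    case True
    have fW: "(\<lambda>\<alpha>. W PiB \<alpha> J / (\<Sum>K\<in>SM PiB. W PiB \<alpha> K)) =
        (\<lambda>\<alpha>. exp (\<alpha> * real (hc J) + sc J) / (\<Sum>K\<in>SM PiB. exp (\<alpha> * real (hc K) + sc K)))"
      using W_eq True by (intro ext) (simp add: W_eq)
    have "(\<Sum>K\<in>{K\<in>SM PiB. hc K = NH}. exp (sc K)) \<noteq> 0" using Z0 GdEq unfolding Z_def by simp
    from lim_lemma[OF finite_SM True hc_le this]
    have "((\<lambda>\<alpha>. W PiB \<alpha> J / (\<Sum>K\<in>SM PiB. W PiB \<alpha> K)) \<longlongrightarrow> (if good J then exp (sc J) else 0) / Z) at_top"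
      unfolding fW GdEq Z_def using True good_iff hc_N by simp
    then show ?thesis unfolding P_def by (rule tendsto_Lim[rotated]) simp
  next
    case False
    then have "(\<lambda>\<alpha>. W PiB \<alpha> J / (\<Sum>K\<in>SM PiB. W PiB \<alpha> K)) = (\<lambda>\<alpha>. 0)" by (simp add: W_def)
    moreover have "\<not> good J" using False good_iff by blast
    ultimately show ?thesis unfolding P_def by (simp add: tendsto_Lim[OF trivial_limit_at_top_linorder tendsto_const])
  qed
  define AI where "AI = {J. J \<subseteq> lp_atoms PiB \<and> {v. RV v \<in> J} = I}"
  have finAI: "finite AI" unfolding AI_def using finite_atoms by simp
  have AIG: "{J \<in> AI. good J} = {J. good J \<and> {v. RV v \<in> J} = I}"
    unfolding AI_def using Hd_atoms by (auto simp: good_def)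
  have "(\<Sum>J\<in>AI. P PiB J) = (\<Sum>J\<in>AI. if good J then exp (sc J) else 0) / Z"
    unfolding Peq sum_divide_distrib ..
  also have "(\<Sum>J\<in>AI. if good J then exp (sc J) else 0) = (\<Sum>J\<in>{J. good J \<and> {v. RV v \<in> J} = I}. exp (sc J))"
    unfolding AIG[symmetric] sum.inter_filter[OF finAI] ..
  also have "\<dots> = (\<Sum>J\<in>{J. good J \<and> {v. RV v \<in> J} = I}. qq J) / CC"
    unfolding sum_divide_distrib using CC_pos by (intro sum.cong refl) (simp add: q_eq)
  also have "\<dots> = bn_prob Vs par cpt I / CC" using key[OF I] by simp
  finally show ?thesis using Zeq CC_pos unfolding AI_def Z_def by simp
qed

end

theorem mainTheorem6:
  fixes Vs :: "'v set" and par :: "'v \<Rightarrow> 'v list" and cpt :: "'v \<Rightarrow> bool list \<Rightarrow> real"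
    and I :: "'v set"
  assumes "bn_wf Vs par cpt"
    and "I \<subseteq> Vs"
  shows "bn_prob Vs par cpt I =
    (\<Sum>J\<in>{J. J \<subseteq> lp_atoms (bn_translation Vs par cpt) \<and> {v. RV v \<in> J} = I}.
        P (bn_translation Vs par cpt) J)"
proof -
  interpret bnet Vs par cpt by unfold_locales (rule assms(1))
  show ?thesis by (rule main[OF assms(2)])
qed


end
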